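(* For every infinite ordinal $\alpha$, $TA_\alpha=PTA_\alpha$; that is, the models of $\Sigma_\alpha$ are exactly the members of the variety generated by the algebras $\wp(V)$ with $V\subseteq{}^\alpha\alpha^{(Id)}$ permutable.
   Context: ${}^\alpha\alpha^{(Id)}=\{s\in{}^\alpha\alpha:|\{i:s_i\neq i\}|<\omega\}$. $V$ is permutable if $s\circ[i,j]\in V$ for all $s\in V$, $i\neq j<\alpha$, where $[i,j]$ swaps $i$ and $j$. $\wp(V)=\langle\mathcal P(V);\cap,-,S_{ij}\rangle_{i\neq j<\alpha}$ with complement relative to $V$ and $S_{ij}(X)=\{q\in V:q\circ[i,j]\in X\}$. $PTA_\alpha$ is the variety generated by all such $\wp(V)$. $\Sigma_\alpha$ (signature $\wedge,-,s_{ij}$, $i\neq j<\alpha$) consists of the Boolean algebra axioms, the equations saying each $s_{ij}$ is a Boolean endomorphism, and $t_1(x)=t_2(x)$ for all finite words $t_1,t_2$ in the $s_{ij}$ whose associated compositions of transpositions coincide; $TA_\alpha=\mathbf{Mod}(\Sigma_\alpha)$. *)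

theory Defs
  imports Main
begin

text \<open>The ordinal alpha is represented by an index type 'i (only the
underlying set of alpha matters for these algebras).\<close>

definition transp :: "'i \<Rightarrow> 'i \<Rightarrow> 'i \<Rightarrow> 'i" where
  "transp i j = id(i := j, j := i)"

record ('i, 'b) talg =
  carrier :: "'b set"
  mt :: "'b \<Rightarrow> 'b \<Rightarrow> 'b"
  cp :: "'b \<Rightarrow> 'b"
  sb :: "'i \<Rightarrow> 'i \<Rightarrow> 'b \<Rightarrow> 'b"

definition talg_wf :: "('i, 'b) talg \<Rightarrow> bool" where
  "talg_wf A \<longleftrightarrow> carrier A \<noteq> {} \<and>
     (\<forall>x\<in>carrier A. \<forall>y\<in>carrier A. mt A x y \<in> carrier A) \<and>
     (\<forall>x\<in>carrier A. cp A x \<in> carrier A) \<and>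
     (\<forall>i j. i \<noteq> j \<longrightarrow> (\<forall>x\<in>carrier A. sb A i j x \<in> carrier A))"

datatype 'i trm = Var nat | Mt "'i trm" "'i trm" | Cp "'i trm" | Sb 'i 'i "'i trm"

fun wf_trm :: "'i trm \<Rightarrow> bool" where
  "wf_trm (Var n) = True"
| "wf_trm (Mt s t) = (wf_trm s \<and> wf_trm t)"
| "wf_trm (Cp t) = wf_trm t"
| "wf_trm (Sb i j t) = (i \<noteq> j \<and> wf_trm t)"

fun eval :: "('i, 'b) talg \<Rightarrow> (nat \<Rightarrow> 'b) \<Rightarrow> 'i trm \<Rightarrow> 'b" where
  "eval A \<sigma> (Var n) = \<sigma> n"
| "eval A \<sigma> (Mt s t) = mt A (eval A \<sigma> s) (eval A \<sigma> t)"
| "eval A \<sigma> (Cp t) = cp A (eval A \<sigma> t)"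
| "eval A \<sigma> (Sb i j t) = sb A i j (eval A \<sigma> t)"

definition holds :: "('i, 'b) talg \<Rightarrow> 'i trm \<Rightarrow> 'i trm \<Rightarrow> bool" where
  "holds A t1 t2 \<longleftrightarrow> (\<forall>\<sigma>. (\<forall>n. \<sigma> n \<in> carrier A) \<longrightarrow> eval A \<sigma> t1 = eval A \<sigma> t2)"

definition finitary :: "('i \<Rightarrow> 'i) set" where
  "finitary = {s. finite {i. s i \<noteq> i}}"

definition permutable :: "('i \<Rightarrow> 'i) set \<Rightarrow> bool" where
  "permutable V \<longleftrightarrow> (\<forall>s\<in>V. \<forall>i j. i \<noteq> j \<longrightarrow> s \<circ> transp i j \<in> V)"

definition wp :: "('i \<Rightarrow> 'i) set \<Rightarrow> ('i, ('i \<Rightarrow> 'i) set) talg" where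
  "wp V = \<lparr> carrier = Pow V, mt = (\<lambda>X Y. X \<inter> Y), cp = (\<lambda>X. V - X),
           sb = (\<lambda>i j X. {q \<in> V. q \<circ> transp i j \<in> X}) \<rparr>"

text \<open>PTA_alpha: the variety generated by all wp(V), V \<subseteq> finitary permutable,
  i.e. the class of algebras satisfying every equation valid in all these wp(V).\<close>
definition PTA :: "('i, 'b) talg set" where
  "PTA = {A. talg_wf A \<and>
     (\<forall>t1 t2. wf_trm t1 \<and> wf_trm t2 \<and>
        (\<forall>V::('i \<Rightarrow> 'i) set. V \<subseteq> finitary \<and> permutable V \<longrightarrow> holds (wp V) t1 t2)
        \<longrightarrow> holds A t1 t2)}"

definition jn :: "('i, 'b) talg \<Rightarrow> 'b \<Rightarrow> 'b \<Rightarrow> 'b" where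
  "jn A x y = cp A (mt A (cp A x) (cp A y))"

definition boolean_ax :: "('i, 'b) talg \<Rightarrow> bool" where
  "boolean_ax A \<longleftrightarrow> (\<forall>x\<in>carrier A. \<forall>y\<in>carrier A. \<forall>z\<in>carrier A.
      mt A x y = mt A y x \<and> jn A x y = jn A y x \<and>
      mt A (mt A x y) z = mt A x (mt A y z) \<and> jn A (jn A x y) z = jn A x (jn A y z) \<and>
      mt A x (jn A x y) = x \<and> jn A x (mt A x y) = x \<and>
      mt A x (jn A y z) = jn A (mt A x y) (mt A x z) \<and>
      mt A x (cp A x) = mt A y (cp A y) \<and> jn A x (cp A x) = jn A y (cp A y) \<and>
      mt A (mt A x (cp A x)) y = mt A x (cp A x) \<and>
      mt A (jn A x (cp A x)) y = y)"

definition endo_ax :: "('i, 'b) talg \<Rightarrow> bool" where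
  "endo_ax A \<longleftrightarrow> (\<forall>i j. i \<noteq> j \<longrightarrow> (\<forall>x\<in>carrier A. \<forall>y\<in>carrier A.
      sb A i j (mt A x y) = mt A (sb A i j x) (sb A i j y) \<and>
      sb A i j (cp A x) = cp A (sb A i j x)))"

definition word_ok :: "('i \<times> 'i) list \<Rightarrow> bool" where
  "word_ok w \<longleftrightarrow> (\<forall>(i, j)\<in>set w. i \<noteq> j)"

definition word_app :: "('i, 'b) talg \<Rightarrow> ('i \<times> 'i) list \<Rightarrow> 'b \<Rightarrow> 'b" where
  "word_app A w x = foldr (\<lambda>(i, j) y. sb A i j y) w x"

definition word_perm :: "('i \<times> 'i) list \<Rightarrow> 'i \<Rightarrow> 'i" where
  "word_perm w = foldr (\<lambda>(i, j) f. transp i j \<circ> f) w id"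

definition word_ax :: "('i, 'b) talg \<Rightarrow> bool" where
  "word_ax A \<longleftrightarrow> (\<forall>w1 w2. word_ok w1 \<and> word_ok w2 \<and> word_perm w1 = word_perm w2 \<longrightarrow>
      (\<forall>x\<in>carrier A. word_app A w1 x = word_app A w2 x))"

definition TA :: "('i, 'b) talg set" where
  "TA = {A. talg_wf A \<and> boolean_ax A \<and> endo_ax A \<and> word_ax A}"

end

theory Submission
  imports Defs
begin


locale bal =
  fixes C :: "'b set" and m :: "'b \<Rightarrow> 'b \<Rightarrow> 'b" and c :: "'b \<Rightarrow> 'b"
  assumes ne: "C \<noteq> {}"
  and mC: "x \<in> C \<Longrightarrow> y \<in> C \<Longrightarrow> m x y \<in> C"
  and cC: "x \<in> C \<Longrightarrow> c x \<in> C"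
  and com: "x \<in> C \<Longrightarrow> y \<in> C \<Longrightarrow> m x y = m y x"
  and jcom: "x \<in> C \<Longrightarrow> y \<in> C \<Longrightarrow> c (m (c x) (c y)) = c (m (c y) (c x))"
  and ass: "x \<in> C \<Longrightarrow> y \<in> C \<Longrightarrow> z \<in> C \<Longrightarrow> m (m x y) z = m x (m y z)"
  and ab1: "x \<in> C \<Longrightarrow> y \<in> C \<Longrightarrow> m x (c (m (c x) (c y))) = x"
  and ab2: "x \<in> C \<Longrightarrow> y \<in> C \<Longrightarrow> c (m (c x) (c (m x y))) = x"
  and dis: "x \<in> C \<Longrightarrow> y \<in> C \<Longrightarrow> z \<in> C \<Longrightarrow> m x (c (m (c y) (c z))) = c (m (c (m x y)) (c (m x z)))"
  and zc: "x \<in> C \<Longrightarrow> y \<in> C \<Longrightarrow> m x (c x) = m y (c y)"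
  and oc: "x \<in> C \<Longrightarrow> y \<in> C \<Longrightarrow> c (m (c x) (c (c x))) = c (m (c y) (c (c y)))"
  and zl: "x \<in> C \<Longrightarrow> y \<in> C \<Longrightarrow> m (m x (c x)) y = m x (c x)"
  and ol: "x \<in> C \<Longrightarrow> y \<in> C \<Longrightarrow> m (c (m (c x) (c (c x)))) y = y"
begin

definition "x0 = (SOME x. x \<in> C)"
lemma x0: "x0 \<in> C" using ne unfolding x0_def by (simp add: some_in_eq)
definition "z = m x0 (c x0)"
definition "u = c (m (c x0) (c (c x0)))"
definition "jn' x y = c (m (c x) (c y))"

lemma zC: "z \<in> C" and uC: "u \<in> C" using x0 by (auto simp: z_def u_def mC cC)
lemma jC: "x \<in> C \<Longrightarrow> y \<in> C \<Longrightarrow> jn' x y \<in> C" by (simp add: jn'_def mC cC)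
lemma mz: "x \<in> C \<Longrightarrow> m x (c x) = z" using zc[of x x0] x0 unfolding z_def by simp
lemma ju: "x \<in> C \<Longrightarrow> jn' x (c x) = u" using oc[of x x0] x0 unfolding u_def jn'_def by simp
lemma zm: "y \<in> C \<Longrightarrow> m z y = z" using zl[of x0 y] x0 unfolding z_def by simp
lemma um: "y \<in> C \<Longrightarrow> m u y = y" using ol[of x0 y] x0 unfolding u_def by simp
lemma idem: "x \<in> C \<Longrightarrow> m x x = x"
  using ab1[of x "m x x"] ab2[of x x] mC[of x x] by simp
lemma lcom: "x \<in> C \<Longrightarrow> y \<in> C \<Longrightarrow> w \<in> C \<Longrightarrow> m x (m y w) = m y (m x w)"
  by (metis ass com)
lemma lidem: "x \<in> C \<Longrightarrow> y \<in> C \<Longrightarrow> m x (m x y) = m x y"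
  by (metis ass idem)
lemmas AC = ass com lcom lidem idem mC
lemma jz: "y \<in> C \<Longrightarrow> jn' z y = y"
proof -
  assume y: "y \<in> C"
  have "jn' y (m y (c y)) = y" using ab2[of y "c y"] y cC by (simp add: jn'_def)
  then show ?thesis using jcom[of y z] y zC mz by (simp add: jn'_def)
qed
lemma K: "a \<in> C \<Longrightarrow> x \<in> C \<Longrightarrow> m a x = z \<Longrightarrow> m a (c x) = a"
proof -
  assume a: "a \<in> C" and x: "x \<in> C" and e: "m a x = z"
  have "a = m u a" using um a by simp
  also have "\<dots> = m a (jn' x (c x))" using ju x com a uC by simp
  also have "\<dots> = jn' (m a x) (m a (c x))" using dis[of a x "c x"] a x cC by (simp add: jn'_def)
  also have "\<dots> = m a (c x)" using e jz a x cC mC by simp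
  finally show ?thesis by simp
qed
lemma cc: "x \<in> C \<Longrightarrow> c (c x) = x"
proof -
  assume x: "x \<in> C"
  have a: "m x (c (c x)) = x" using K[of x "c x"] x cC mz by simp
  have "c (c x) = m u (c (c x))" using um x cC by simp
  also have "\<dots> = m (c (c x)) (jn' x (c x))" using ju x com cC uC by simp
  also have "\<dots> = jn' (m (c (c x)) x) (m (c (c x)) (c x))" using dis[of "c (c x)" x "c x"] x cC by (simp add: jn'_def)
  also have "\<dots> = jn' z (m (c (c x)) x)"
  proof -
    have e: "m (c (c x)) (c x) = z" using com[of "c (c x)" "c x"] mz[of "c x"] x cC by simp
    show ?thesis using jcom[of "m (c (c x)) x" z] e x cC mC zC by (simp add: jn'_def)
  qed
  also have "\<dots> = m x (c (c x))" using jz x cC mC com by simp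
  finally show ?thesis using a by simp
qed
lemma sep: "a \<in> C \<Longrightarrow> b \<in> C \<Longrightarrow> a \<noteq> b \<Longrightarrow> m a (c b) \<noteq> z \<or> m b (c a) \<noteq> z"
proof (rule ccontr)
  assume a: "a \<in> C" "b \<in> C" "a \<noteq> b" "\<not> (m a (c b) \<noteq> z \<or> m b (c a) \<noteq> z)"
  then have "m a b = a" "m b a = b" using K[of a "c b"] K[of b "c a"] cc cC by auto
  then show False using com[of a b] a by simp
qed

definition "filt F \<longleftrightarrow> F \<subseteq> C \<and> (\<forall>x\<in>F. \<forall>y\<in>F. m x y \<in> F) \<and> (\<forall>x\<in>F. \<forall>y\<in>C. m x y = x \<longrightarrow> y \<in> F) \<and> z \<notin> F"

lemma filtI: "F \<subseteq> C \<Longrightarrow> (\<forall>x\<in>F. \<forall>y\<in>F. m x y \<in> F) \<Longrightarrow> (\<forall>x\<in>F. \<forall>y\<in>C. m x y = x \<longrightarrow> y \<in> F) \<Longrightarrow> z \<notin> F \<Longrightarrow> filt F"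
  unfolding filt_def by simp
lemma filtC: "filt F \<Longrightarrow> F \<subseteq> C" unfolding filt_def by simp
lemma filtM: "filt F \<Longrightarrow> x \<in> F \<Longrightarrow> y \<in> F \<Longrightarrow> m x y \<in> F" unfolding filt_def by simp
lemma filtU: "filt F \<Longrightarrow> x \<in> F \<Longrightarrow> y \<in> C \<Longrightarrow> m x y = x \<Longrightarrow> y \<in> F" unfolding filt_def by simp
lemma filtZ: "filt F \<Longrightarrow> z \<notin> F" unfolding filt_def by simp

lemma trans_le: "a \<in> C \<Longrightarrow> y \<in> C \<Longrightarrow> y' \<in> C \<Longrightarrow> m a y = a \<Longrightarrow> m y y' = y \<Longrightarrow> m a y' = a"
  using ass[of a y y'] by simp

lemma ultra_exists:
  assumes c0: "c0 \<in> C" "c0 \<noteq> z"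
  shows "\<exists>M. filt M \<and> c0 \<in> M \<and> (\<forall>x\<in>C. x \<in> M \<or> c x \<in> M)"
proof -
  let ?A = "{F. filt F \<and> c0 \<in> F}"
  have P: "{y\<in>C. m c0 y = c0} \<in> ?A"
  proof -
    let ?S = "{y \<in> C. m c0 y = c0}"
    have 1: "c0 \<in> ?S" using c0 idem by auto
    have 2: "z \<notin> ?S" using c0 com[of c0 z] zC zm[of c0] by auto
    have 3: "\<forall>x\<in>?S. \<forall>y\<in>?S. m x y \<in> ?S"
    proof (intro ballI)
      fix x y assume "x \<in> ?S" "y \<in> ?S"
      then show "m x y \<in> ?S" using ass[of c0 x y] c0 mC by auto
    qed
    have 4: "\<forall>x\<in>?S. \<forall>y\<in>C. m x y = x \<longrightarrow> y \<in> ?S"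
    proof (intro ballI impI)
      fix x y assume "x \<in> ?S" "y \<in> C" "m x y = x"
      then show "y \<in> ?S" using trans_le[of c0 x y] c0 by auto
    qed
    show ?thesis using filtI[OF _ 3 4 2] 1 by auto
  qed
  have "\<exists>M\<in>?A. \<forall>X\<in>?A. M \<subseteq> X \<longrightarrow> X = M"
  proof (rule subset_Zorn_nonempty)
    show "?A \<noteq> {}" using P by blast
    fix CC assume ne: "CC \<noteq> {}" and ch: "subset.chain ?A CC"
    have chA: "\<And>X. X \<in> CC \<Longrightarrow> filt X \<and> c0 \<in> X" using ch by (auto simp: subset_chain_def)
    have cmp: "\<And>X Y. X \<in> CC \<Longrightarrow> Y \<in> CC \<Longrightarrow> X \<subseteq> Y \<or> Y \<subseteq> X" using ch by (auto simp: subset_chain_def)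
    have sub: "\<And>X. X \<in> CC \<Longrightarrow> X \<subseteq> C" using chA filtC by blast
    have 1: "\<Union>CC \<subseteq> C" using sub by blast
    have 2: "z \<notin> \<Union>CC" using chA filtZ by blast
    have 3: "c0 \<in> \<Union>CC" using chA ne by blast
    have 4: "\<forall>x\<in>\<Union>CC. \<forall>y\<in>C. m x y = x \<longrightarrow> y \<in> \<Union>CC"
    proof (intro ballI impI)
      fix x y assume "x \<in> \<Union>CC" "y \<in> C" "m x y = x"
      then obtain X where X: "X \<in> CC" "x \<in> X" by auto
      then have "y \<in> X" using chA[OF X(1)] \<open>y \<in> C\<close> \<open>m x y = x\<close> filtU by blast
      then show "y \<in> \<Union>CC" using X by blast
    qed
    have 5: "\<forall>x\<in>\<Union>CC. \<forall>y\<in>\<Union>CC. m x y \<in> \<Union>CC"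
    proof (intro ballI)
      fix x y assume "x \<in> \<Union>CC" "y \<in> \<Union>CC"
      then obtain X Y where XY: "X \<in> CC" "Y \<in> CC" "x \<in> X" "y \<in> Y" by auto
      have fX: "filt X" "filt Y" using XY chA by auto
      from cmp[OF XY(1,2)] show "m x y \<in> \<Union>CC"
      proof
        assume "X \<subseteq> Y" then have "m x y \<in> Y" using XY fX filtM by blast
        then show ?thesis using XY by blast
      next
        assume "Y \<subseteq> X" then have "m x y \<in> X" using XY fX filtM by blast
        then show ?thesis using XY by blast
      qed
    qed
    show "\<Union>CC \<in> ?A" using filtI[OF 1 5 4 2] 3 by blast
  qed
  then obtain M where M: "filt M" "c0 \<in> M" and mx: "\<And>X. X \<in> ?A \<Longrightarrow> M \<subseteq> X \<Longrightarrow> X = M" by blast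
  have MC: "M \<subseteq> C" using M filtC by auto
  have "\<forall>x\<in>C. x \<in> M \<or> c x \<in> M"
  proof (intro ballI)
    fix x assume x: "x \<in> C"
    show "x \<in> M \<or> c x \<in> M"
    proof (rule ccontr)
      assume nn: "\<not> (x \<in> M \<or> c x \<in> M)"
      let ?M' = "{y\<in>C. \<exists>p\<in>M. m (m p x) y = m p x}"
      show False
      proof (cases "z \<in> ?M'")
        case True
        then obtain p where p: "p \<in> M" "m (m p x) z = m p x" by auto
        have pC: "p \<in> C" using p MC by auto
        have "m p x = z" using p(2) zm[of "m p x"] com[of "m p x" z] mC pC x zC by simp
        then have "m p (c x) = p" using K pC x by simp
        then have "c x \<in> M" using filtU[OF M(1) p(1), of "c x"] cC x by simp
        then show False using nn by simp
      next
        case False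
        have q1: "?M' \<subseteq> C" by auto
        have q2: "z \<notin> ?M'" using False .
        have q3: "c0 \<in> ?M'"
          proof -
            have "m (m c0 x) c0 = m c0 x" using c0 x by (simp add: AC)
            then show ?thesis using M c0 by auto
          qed
        have q4: "\<forall>xa\<in>?M'. \<forall>y\<in>C. m xa y = xa \<longrightarrow> y \<in> ?M'"
          proof (intro ballI impI)
            fix y1 y assume "y1 \<in> ?M'" "y \<in> C" "m y1 y = y1"
            then obtain p where p: "p \<in> M" "y1 \<in> C" "m (m p x) y1 = m p x" by auto
            have "p \<in> C" using p MC by auto
            then have "m (m p x) y = m p x" using trans_le[of "m p x" y1 y] p \<open>y \<in> C\<close> \<open>m y1 y = y1\<close> x mC by auto
            then show "y \<in> ?M'" using p \<open>y \<in> C\<close> by auto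
          qed
        have q5: "\<forall>xa\<in>?M'. \<forall>y\<in>?M'. m xa y \<in> ?M'"
          proof (intro ballI)
            fix y1 y2 assume "y1 \<in> ?M'" "y2 \<in> ?M'"
            then obtain p1 p2 where p: "p1 \<in> M" "p2 \<in> M" "y1 \<in> C" "y2 \<in> C"
              "m (m p1 x) y1 = m p1 x" "m (m p2 x) y2 = m p2 x" by auto
            have pC: "p1 \<in> C" "p2 \<in> C" using p MC by auto
            have pM: "m p1 p2 \<in> M" using M p filtM by blast
            have "m (m (m p1 p2) x) (m y1 y2) = m (m p1 p2) x"
            proof -
              have "m (m (m p1 p2) x) (m y1 y2) = m (m (m p1 x) y1) (m (m p2 x) y2)"
                using pC p(3,4) x by (simp add: AC)
              also have "\<dots> = m (m p1 x) (m p2 x)"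
                by (simp only: p(5,6))
              also have "\<dots> = m (m p1 p2) x"
                using pC x by (simp add: AC)
              finally show ?thesis .
            qed
            then show "m y1 y2 \<in> ?M'" using pM p mC by blast
          qed
        have "?M' \<in> ?A" using filtI[OF q1 q5 q4 q2] q3 by blast
        moreover have "M \<subseteq> ?M'"
        proof
          fix p assume p: "p \<in> M"
          then have pC: "p \<in> C" using MC by auto
          have "m (m p x) p = m p x" using pC x by (simp add: AC)
          then show "p \<in> ?M'" using p pC by auto
        qed
        ultimately have "?M' = M" using mx by blast
        moreover have "x \<in> ?M'"
        proof -
          have "m (m c0 x) x = m c0 x" using c0 x by (simp add: AC)
          then show ?thesis using x M by auto
        qed
        ultimately show False using nn by simp
      qed
    qed
  qed
  then show ?thesis using M by blast
qed

lemma hom_exists: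
  assumes "a \<in> C" "b \<in> C" "a \<noteq> b"
  shows "\<exists>f. (\<forall>x\<in>C. \<forall>y\<in>C. f (m x y) = (f x \<and> f y)) \<and> (\<forall>x\<in>C. f (c x) = (\<not> f x)) \<and> f a \<noteq> f b"
proof -
  have gen: "\<exists>f. (\<forall>x\<in>C. \<forall>y\<in>C. f (m x y) = (f x \<and> f y)) \<and> (\<forall>x\<in>C. f (c x) = (\<not> f x)) \<and> f a \<and> \<not> f b"
    if ab: "a \<in> C" "b \<in> C" "m a (c b) \<noteq> z" for a b
  proof -
    have c0: "m a (c b) \<in> C" using ab mC cC by auto
    obtain M where M: "filt M" "m a (c b) \<in> M" "\<forall>x\<in>C. x \<in> M \<or> c x \<in> M"
      using ultra_exists[OF c0 ab(3)] by blast
    have MC: "M \<subseteq> C" using M filtC by auto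
    have up: "\<And>x y. x \<in> M \<Longrightarrow> y \<in> C \<Longrightarrow> m x y = x \<Longrightarrow> y \<in> M" using M filtU by blast
    have mm: "\<And>x y. x \<in> M \<Longrightarrow> y \<in> M \<Longrightarrow> m x y \<in> M" using M filtM by blast
    have zM: "z \<notin> M" using M filtZ by blast
    have h1: "\<forall>x\<in>C. \<forall>y\<in>C. (m x y \<in> M) = (x \<in> M \<and> y \<in> M)"
    proof (intro ballI iffI)
      fix x y assume xy: "x \<in> C" "y \<in> C" and "m x y \<in> M"
      moreover have "m (m x y) x = m x y" "m (m x y) y = m x y"
        using xy by (simp_all add: AC)
      ultimately show "x \<in> M \<and> y \<in> M" using up xy by blast
    qed (simp add: mm)
    have h2: "\<forall>x\<in>C. (c x \<in> M) = (x \<notin> M)"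
    proof
      fix x assume x: "x \<in> C"
      show "(c x \<in> M) = (x \<notin> M)"
      proof
        assume "c x \<in> M" then show "x \<notin> M" using mm[of x "c x"] mz[OF x] zM by auto
      qed (use M(3) x in auto)
    qed
    have "a \<in> M" "c b \<in> M" using h1 M(2) ab cC by auto
    then have "a \<in> M \<and> b \<notin> M" using h2 ab by auto
    then show ?thesis using h1 h2 by (intro exI[of _ "\<lambda>x. x \<in> M"]) auto
  qed
  from sep[OF assms] show ?thesis
  proof
    assume "m a (c b) \<noteq> z"
    from gen[OF assms(1,2) this] obtain f where "(\<forall>x\<in>C. \<forall>y\<in>C. f (m x y) = (f x \<and> f y)) \<and> (\<forall>x\<in>C. f (c x) = (\<not> f x)) \<and> f a \<and> \<not> f b"
      by blast
    then show ?thesis by (intro exI[of _ f]) auto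
  next
    assume "m b (c a) \<noteq> z"
    from gen[OF assms(2,1) this] obtain f where "(\<forall>x\<in>C. \<forall>y\<in>C. f (m x y) = (f x \<and> f y)) \<and> (\<forall>x\<in>C. f (c x) = (\<not> f x)) \<and> f b \<and> \<not> f a"
      by blast
    then show ?thesis by (intro exI[of _ f]) auto
  qed
qed

end


lemma word_app_append: "word_app A (w1 @ w2) x = word_app A w1 (word_app A w2 x)"
  by (simp add: word_app_def)

lemma word_perm_Cons': "word_perm (p # w) = transp (fst p) (snd p) \<circ> word_perm w"
  by (simp add: word_perm_def split_def)

lemma foldr_perm: "foldr (\<lambda>(i, j) f. transp i j \<circ> f) w g = word_perm w \<circ> g"
proof (induction w)
  case Nil then show ?case by (simp add: word_perm_def)
next
  case (Cons p w) then show ?case by (simp add: word_perm_Cons' split_def o_assoc)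
qed

lemma word_perm_append: "word_perm (w1 @ w2) = word_perm w1 \<circ> word_perm w2"
  by (simp only: word_perm_def[of "w1 @ w2"] foldr_append o_apply foldr_perm o_id)

lemma word_perm_Cons: "word_perm ((i, j) # w) = transp i j \<circ> word_perm w"
  by (simp add: word_perm_def)

lemma word_perm_single: "word_perm [(i, j)] = transp i j"
  by (simp add: word_perm_def)

lemma word_ok_append: "word_ok (w1 @ w2) \<longleftrightarrow> word_ok w1 \<and> word_ok w2"
  by (auto simp: word_ok_def)

lemma word_ok_Cons: "word_ok ((i, j) # w) \<longleftrightarrow> i \<noteq> j \<and> word_ok w"
  by (auto simp: word_ok_def)

lemma word_perm_finitary: "word_perm w \<in> finitary"
proof (induction w)
  case Nil then show ?case by (simp add: word_perm_def finitary_def)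
next
  case (Cons p w)
  obtain i j where p: "p = (i, j)" by (cases p)
  have "{k. (transp i j \<circ> word_perm w) k \<noteq> k} \<subseteq> {k. word_perm w k \<noteq> k} \<union> {i, j}"
    by (auto simp: transp_def)
  then show ?case using Cons by (simp add: p word_perm_Cons finitary_def finite_subset)
qed

definition VV :: "('i \<Rightarrow> 'i) set" where "VV = word_perm ` {w. word_ok w}"

lemma VV_finitary: "VV \<subseteq> finitary" using word_perm_finitary by (auto simp: VV_def)

lemma VV_perm: "permutable (VV :: ('i \<Rightarrow> 'i) set)"
  unfolding permutable_def VV_def
proof (intro ballI allI impI)
  fix s :: "'i \<Rightarrow> 'i" and i j :: 'i assume "s \<in> word_perm ` {w. word_ok w}" "i \<noteq> j"
  then obtain w where w: "word_ok w" "s = word_perm w" by auto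
  have "s \<circ> transp i j = word_perm (w @ [(i, j)])" using w by (simp add: word_perm_append word_perm_single)
  moreover have "word_ok (w @ [(i, j)])" using w \<open>i \<noteq> j\<close> by (simp add: word_ok_append word_ok_def)
  ultimately show "s \<circ> transp i j \<in> word_perm ` {w. word_ok w}" by blast
qed

lemma id_VV: "id \<in> VV"
proof -
  have "word_perm [] = id" by (simp add: word_perm_def)
  moreover have "word_ok []" by (simp add: word_ok_def)
  ultimately show ?thesis unfolding VV_def by (metis image_eqI mem_Collect_eq)
qed

lemma eval_C: "talg_wf A \<Longrightarrow> wf_trm t \<Longrightarrow> (\<forall>n. \<sigma> n \<in> carrier A) \<Longrightarrow> eval A \<sigma> t \<in> carrier A"
  by (induction t) (auto simp: talg_wf_def)

lemma wa_C: "talg_wf A \<Longrightarrow> word_ok w \<Longrightarrow> x \<in> carrier A \<Longrightarrow> word_app A w x \<in> carrier A"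
  by (induction w) (auto simp: word_app_def talg_wf_def word_ok_def)

lemma wa_mt: "talg_wf A \<Longrightarrow> endo_ax A \<Longrightarrow> word_ok w \<Longrightarrow> x \<in> carrier A \<Longrightarrow> y \<in> carrier A \<Longrightarrow>
   word_app A w (mt A x y) = mt A (word_app A w x) (word_app A w y)"
proof (induction w)
  case Nil then show ?case by (simp add: word_app_def)
next
  case (Cons p w)
  obtain i j where p: "p = (i, j)" by (cases p)
  have ij: "i \<noteq> j" "word_ok w" using Cons.prems p by (auto simp: word_ok_def)
  have "word_app A (p # w) (mt A x y) = sb A i j (mt A (word_app A w x) (word_app A w y))"
    using Cons ij by (simp add: p word_app_def)
  also have "\<dots> = mt A (sb A i j (word_app A w x)) (sb A i j (word_app A w y))"
    using Cons.prems ij wa_C[of A w x] wa_C[of A w y] by (simp add: endo_ax_def)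
  finally show ?case by (simp add: p word_app_def)
qed

lemma wa_cp: "talg_wf A \<Longrightarrow> endo_ax A \<Longrightarrow> word_ok w \<Longrightarrow> x \<in> carrier A \<Longrightarrow>
   word_app A w (cp A x) = cp A (word_app A w x)"
proof (induction w)
  case Nil then show ?case by (simp add: word_app_def)
next
  case (Cons p w)
  obtain i j where p: "p = (i, j)" by (cases p)
  have ij: "i \<noteq> j" "word_ok w" using Cons.prems p by (auto simp: word_ok_def)
  have "word_app A (p # w) (cp A x) = sb A i j (cp A (word_app A w x))"
    using Cons ij by (simp add: p word_app_def)
  also have "\<dots> = cp A (sb A i j (word_app A w x))"
    using Cons.prems ij wa_C[of A w x] by (simp add: endo_ax_def)
  finally show ?case by (simp add: p word_app_def)
qed

lemma bal_of: "talg_wf A \<Longrightarrow> boolean_ax A \<Longrightarrow> bal (carrier A) (mt A) (cp A)"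
proof -
  assume wf: "talg_wf A" and ba: "boolean_ax A"
  have H0: "\<forall>x\<in>carrier A. \<forall>y\<in>carrier A. \<forall>z\<in>carrier A.
      mt A x y = mt A y x \<and> jn A x y = jn A y x \<and>
      mt A (mt A x y) z = mt A x (mt A y z) \<and> jn A (jn A x y) z = jn A x (jn A y z) \<and>
      mt A x (jn A x y) = x \<and> jn A x (mt A x y) = x \<and>
      mt A x (jn A y z) = jn A (mt A x y) (mt A x z) \<and>
      mt A x (cp A x) = mt A y (cp A y) \<and> jn A x (cp A x) = jn A y (cp A y) \<and>
      mt A (mt A x (cp A x)) y = mt A x (cp A x) \<and>
      mt A (jn A x (cp A x)) y = y"
    using ba unfolding boolean_ax_def .
  have H: "mt A x y = mt A y x \<and> jn A x y = jn A y x \<and>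
      mt A (mt A x y) z = mt A x (mt A y z) \<and> jn A (jn A x y) z = jn A x (jn A y z) \<and>
      mt A x (jn A x y) = x \<and> jn A x (mt A x y) = x \<and>
      mt A x (jn A y z) = jn A (mt A x y) (mt A x z) \<and>
      mt A x (cp A x) = mt A y (cp A y) \<and> jn A x (cp A x) = jn A y (cp A y) \<and>
      mt A (mt A x (cp A x)) y = mt A x (cp A x) \<and>
      mt A (jn A x (cp A x)) y = y" if "x \<in> carrier A" "y \<in> carrier A" "z \<in> carrier A" for x y z
    using bspec[OF bspec[OF bspec[OF H0 that(1)] that(2)] that(3)] .
  show ?thesis
  proof
    show "carrier A \<noteq> {}" using wf by (simp add: talg_wf_def)
  next
    fix x y assume "x \<in> carrier A" "y \<in> carrier A"
    then show "mt A x y \<in> carrier A" using wf by (simp add: talg_wf_def)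
  next
    fix x assume "x \<in> carrier A"
    then show "cp A x \<in> carrier A" using wf by (simp add: talg_wf_def)
  next
    fix x y assume a: "x \<in> carrier A" "y \<in> carrier A"
    from H[OF a a(1)] show "mt A x y = mt A y x" by blast
    from H[OF a a(1)] show "cp A (mt A (cp A x) (cp A y)) = cp A (mt A (cp A y) (cp A x))" unfolding jn_def by blast
    from H[OF a a(1)] show "mt A x (cp A (mt A (cp A x) (cp A y))) = x" unfolding jn_def by blast
    from H[OF a a(1)] show "cp A (mt A (cp A x) (cp A (mt A x y))) = x" unfolding jn_def by blast
    from H[OF a a(1)] show "mt A x (cp A x) = mt A y (cp A y)" by blast
    from H[OF a a(1)] show "cp A (mt A (cp A x) (cp A (cp A x))) = cp A (mt A (cp A y) (cp A (cp A y)))" unfolding jn_def by blast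
    from H[OF a a(1)] show "mt A (mt A x (cp A x)) y = mt A x (cp A x)" by blast
    from H[OF a a(1)] show "mt A (cp A (mt A (cp A x) (cp A (cp A x)))) y = y" unfolding jn_def by blast
  next
    fix x y z assume a: "x \<in> carrier A" "y \<in> carrier A" "z \<in> carrier A"
    from H[OF a] show "mt A (mt A x y) z = mt A x (mt A y z)" by blast
    from H[OF a] show "mt A x (cp A (mt A (cp A y) (cp A z))) = cp A (mt A (cp A (mt A x y)) (cp A (mt A x z)))" unfolding jn_def by blast
  qed
qed

lemma TA_sub_PTA:
  fixes A :: "('i, 'b) talg"
  assumes A: "A \<in> TA"
  shows "A \<in> PTA"
proof -
  have wf: "talg_wf A" and ba: "boolean_ax A" and en: "endo_ax A" and wx: "word_ax A"
    using A by (auto simp: TA_def)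
  interpret bal "carrier A" "mt A" "cp A" using bal_of wf ba by blast
  have "holds A t1 t2" if w: "wf_trm t1" "wf_trm t2"
     and val: "\<forall>V::('i \<Rightarrow> 'i) set. V \<subseteq> finitary \<and> permutable V \<longrightarrow> holds (wp V) t1 t2" for t1 t2
    unfolding holds_def
  proof (intro allI impI)
    fix \<sigma> :: "nat \<Rightarrow> 'b" assume \<sigma>: "\<forall>n. \<sigma> n \<in> carrier A"
    show "eval A \<sigma> t1 = eval A \<sigma> t2"
    proof (rule ccontr)
      assume ne: "eval A \<sigma> t1 \<noteq> eval A \<sigma> t2"
      have aC: "eval A \<sigma> t1 \<in> carrier A" "eval A \<sigma> t2 \<in> carrier A" using eval_C wf w \<sigma> by auto
      obtain f where fm: "\<forall>x\<in>carrier A. \<forall>y\<in>carrier A. f (mt A x y) = (f x \<and> f y)"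
        and fc: "\<forall>x\<in>carrier A. f (cp A x) = (\<not> f x)" and fab: "f (eval A \<sigma> t1) \<noteq> f (eval A \<sigma> t2)"
        using hom_exists[OF aC ne] by blast
      define s where "s q x = word_app A (SOME w. word_ok w \<and> word_perm w = q) x" for q x
      have s_eq: "s (word_perm w) x = word_app A w x" if "word_ok w" "x \<in> carrier A" for w x
      proof -
        have "\<exists>w'. word_ok w' \<and> word_perm w' = word_perm w" using that by blast
        then have "word_ok (SOME w'. word_ok w' \<and> word_perm w' = word_perm w) \<and>
           word_perm (SOME w'. word_ok w' \<and> word_perm w' = word_perm w) = word_perm w"
          by (rule someI_ex)
        then show ?thesis using wx that unfolding s_def word_ax_def by blast
      qed
      have sV: "\<exists>w. word_ok w \<and> q = word_perm w" if "q \<in> VV" for q using that by (auto simp: VV_def)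
      have sC: "s q x \<in> carrier A" if "q \<in> VV" "x \<in> carrier A" for q x
        using sV[OF that(1)] s_eq wa_C wf that(2) by auto
      define h where "h x = {q \<in> VV. f (s q x)}" for x
      have hom: "h (eval A \<sigma>' t) = eval (wp VV) (h \<circ> \<sigma>') t"
        if "wf_trm t" "\<forall>n. \<sigma>' n \<in> carrier A" for t \<sigma>'
        using that
      proof (induction t)
        case (Var n) then show ?case by simp
      next
        case (Mt t1 t2)
        have C: "eval A \<sigma>' t1 \<in> carrier A" "eval A \<sigma>' t2 \<in> carrier A" using Mt.prems eval_C wf by auto
        have "h (eval A \<sigma>' (Mt t1 t2)) = h (eval A \<sigma>' t1) \<inter> h (eval A \<sigma>' t2)"
        proof -
          have "f (s q (mt A a b)) = (f (s q a) \<and> f (s q b))" if qv: "q \<in> VV" and av: "a \<in> carrier A" "b \<in> carrier A" for q a b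
          proof -
            obtain w where w: "word_ok w" "q = word_perm w" using sV[OF qv] by blast
            have "s q (mt A a b) = mt A (s q a) (s q b)"
              using w that s_eq wa_mt[OF wf en] mC by simp
            then show ?thesis using fm sC that by simp
          qed
          then show ?thesis using C unfolding h_def by auto
        qed
        then show ?case using Mt by (simp add: wp_def)
      next
        case (Cp t)
        have C: "eval A \<sigma>' t \<in> carrier A" using Cp.prems eval_C wf by auto
        have "h (eval A \<sigma>' (Cp t)) = VV - h (eval A \<sigma>' t)"
        proof -
          have "f (s q (cp A a)) = (\<not> f (s q a))" if qv: "q \<in> VV" and av: "a \<in> carrier A" for q a
          proof -
            obtain w where w: "word_ok w" "q = word_perm w" using sV[OF qv] by blast
            have "s q (cp A a) = cp A (s q a)"
              using w that s_eq wa_cp[OF wf en] cC by simp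
            then show ?thesis using fc sC that by simp
          qed
          then show ?thesis using C unfolding h_def by auto
        qed
        then show ?case using Cp by (simp add: wp_def)
      next
        case (Sb i j t)
        have ij: "i \<noteq> j" using Sb.prems by simp
        have C: "eval A \<sigma>' t \<in> carrier A" using Sb.prems eval_C wf by auto
        have "h (eval A \<sigma>' (Sb i j t)) = {q \<in> VV. q \<circ> transp i j \<in> h (eval A \<sigma>' t)}"
        proof -
          have "s q (sb A i j a) = s (q \<circ> transp i j) a \<and> q \<circ> transp i j \<in> VV" if qv: "q \<in> VV" and av: "a \<in> carrier A" for q a
          proof -
            obtain w where w: "word_ok w" "q = word_perm w" using sV[OF qv] by blast
            have ok: "word_ok (w @ [(i, j)])" using w ij by (simp add: word_ok_append word_ok_def)
            have pe: "q \<circ> transp i j = word_perm (w @ [(i, j)])" using w by (simp add: word_perm_append word_perm_single)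
            have "s q (sb A i j a) = word_app A w (sb A i j a)" using w s_eq wf that ij by (simp add: talg_wf_def)
            also have "\<dots> = word_app A (w @ [(i, j)]) a" by (simp add: word_app_append word_app_def)
            also have "\<dots> = s (q \<circ> transp i j) a" using pe s_eq ok that by simp
            finally show ?thesis using pe ok by (auto simp: VV_def)
          qed
          then show ?thesis using C unfolding h_def by auto
        qed
        then show ?case using Sb by (simp add: wp_def)
      qed
      have "holds (wp VV) t1 t2" using val VV_finitary VV_perm by blast
      moreover have "\<forall>n. (h \<circ> \<sigma>) n \<in> carrier (wp VV)" by (auto simp: wp_def h_def)
      ultimately have "eval (wp VV) (h \<circ> \<sigma>) t1 = eval (wp VV) (h \<circ> \<sigma>) t2" unfolding holds_def by blast
      then have eqh: "h (eval A \<sigma> t1) = h (eval A \<sigma> t2)" using hom w \<sigma> by simp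
      have sid: "s id x = x" if "x \<in> carrier A" for x
      proof -
        have "s (word_perm []) x = word_app A [] x" using s_eq that by (simp add: word_ok_def)
        then show ?thesis by (simp add: word_perm_def word_app_def)
      qed
      have "id \<in> h (eval A \<sigma> t1) \<longleftrightarrow> f (eval A \<sigma> t1)" "id \<in> h (eval A \<sigma> t2) \<longleftrightarrow> f (eval A \<sigma> t2)"
        using id_VV sid aC by (auto simp: h_def)
      then show False using eqh fab by simp
    qed
  qed
  then show ?thesis using wf unfolding PTA_def by blast
qed



lemma pta_law:
  fixes A :: "('i, 'b) talg" and t1 t2 :: "'i trm"
  assumes A: "A \<in> PTA" and w: "wf_trm t1" "wf_trm t2"
  and valid: "\<And>(V::('i \<Rightarrow> 'i) set) \<sigma>. (\<forall>n. \<sigma> n \<subseteq> V) \<Longrightarrow> permutable V \<Longrightarrow> eval (wp V) \<sigma> t1 = eval (wp V) \<sigma> t2"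
  and s: "\<forall>n. \<sigma> n \<in> carrier A"
  shows "eval A \<sigma> t1 = eval A \<sigma> t2"
proof -
  have "holds (wp V) t1 t2" if "V \<subseteq> finitary \<and> permutable V" for V :: "('i \<Rightarrow> 'i) set"
    unfolding holds_def using valid that by (auto simp: wp_def)
  then have "holds A t1 t2" using A w unfolding PTA_def by blast
  then show ?thesis using s unfolding holds_def by blast
qed

definition wtrm :: "('i \<times> 'i) list \<Rightarrow> 'i trm" where
  "wtrm w = foldr (\<lambda>(i, j) t. Sb i j t) w (Var 0)"

lemma wtrm_wf: "word_ok w \<Longrightarrow> wf_trm (wtrm w)"
  by (induction w) (auto simp: wtrm_def word_ok_def)

lemma wtrm_eval: "eval A \<sigma> (wtrm w) = word_app A w (\<sigma> 0)"
  by (induction w) (auto simp: wtrm_def word_app_def)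

lemma wtrm_wp: "word_ok w \<Longrightarrow> permutable V \<Longrightarrow> X \<subseteq> V \<Longrightarrow>
  word_app (wp V) w X = {q \<in> V. q \<circ> word_perm w \<in> X}"
proof (induction w)
  case Nil then show ?case by (auto simp: word_app_def word_perm_def)
next
  case (Cons p w)
  obtain i j where p: "p = (i, j)" by (cases p)
  have ij: "i \<noteq> j" "word_ok w" using Cons.prems p by (auto simp: word_ok_def)
  have "word_app (wp V) (p # w) X = sb (wp V) i j (word_app (wp V) w X)"
    by (simp add: p word_app_def)
  also have "\<dots> = sb (wp V) i j {q \<in> V. q \<circ> word_perm w \<in> X}"
    by (simp only: Cons.IH[OF ij(2) Cons.prems(2) Cons.prems(3)])
  also have "\<dots> = {q \<in> V. q \<circ> transp i j \<in> {q \<in> V. q \<circ> word_perm w \<in> X}}"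
    by (simp add: wp_def)
  also have "\<dots> = {q \<in> V. q \<circ> (transp i j \<circ> word_perm w) \<in> X}"
    using Cons.prems ij unfolding permutable_def by (auto simp: comp_assoc)
  finally show ?case by (simp add: p word_perm_Cons comp_def)
qed

lemma PTA_sub_TA:
  fixes A :: "('i, 'b) talg"
  assumes A: "A \<in> PTA"
  shows "A \<in> TA"
proof -
  have wf: "talg_wf A" using A by (simp add: PTA_def)
  define X :: "'i trm" where "X = Var 0"
  define Y :: "'i trm" where "Y = Var 1"
  define Z :: "'i trm" where "Z = Var 2"
  define J :: "'i trm \<Rightarrow> 'i trm \<Rightarrow> 'i trm" where "J s t = Cp (Mt (Cp s) (Cp t))" for s t
  have ba: "boolean_ax A" unfolding boolean_ax_def
  proof (intro ballI)
    fix x y z assume xyz: "x \<in> carrier A" "y \<in> carrier A" "z \<in> carrier A"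
    define \<sigma> where "\<sigma> n = (if n = 0 then x else if n = 1 then y else z)" for n :: nat
    have s: "\<forall>n. \<sigma> n \<in> carrier A" using xyz by (simp add: \<sigma>_def)
    have e: "eval A \<sigma> X = x" "eval A \<sigma> Y = y" "eval A \<sigma> Z = z"
      "\<And>s t. eval A \<sigma> (J s t) = jn A (eval A \<sigma> s) (eval A \<sigma> t)"
      by (simp_all add: \<sigma>_def X_def Y_def Z_def J_def jn_def)
    have wfs: "wf_trm X" "wf_trm Y" "wf_trm Z" "\<And>s t. wf_trm (J s t) = (wf_trm s \<and> wf_trm t)"
      by (simp_all add: X_def Y_def Z_def J_def)
    note PL = pta_law[OF A _ _ _ s]
    have 1: "eval A \<sigma> (Mt X Y) = eval A \<sigma> (Mt Y X)"
      by (rule PL) (auto simp: X_def Y_def Z_def J_def wp_def)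
    have 2: "eval A \<sigma> (J X Y) = eval A \<sigma> (J Y X)"
      by (rule PL) (auto simp: X_def Y_def Z_def J_def wp_def)
    have 3: "eval A \<sigma> (Mt (Mt X Y) Z) = eval A \<sigma> (Mt X (Mt Y Z))"
      by (rule PL) (auto simp: X_def Y_def Z_def J_def wp_def)
    have 4: "eval A \<sigma> (J (J X Y) Z) = eval A \<sigma> (J X (J Y Z))"
      by (rule PL) (auto simp: X_def Y_def Z_def J_def wp_def)
    have 5: "eval A \<sigma> (Mt X (J X Y)) = eval A \<sigma> X"
      by (rule PL) (auto simp: X_def Y_def Z_def J_def wp_def)
    have 6: "eval A \<sigma> (J X (Mt X Y)) = eval A \<sigma> X"
      by (rule PL) (auto simp: X_def Y_def Z_def J_def wp_def)
    have 7: "eval A \<sigma> (Mt X (J Y Z)) = eval A \<sigma> (J (Mt X Y) (Mt X Z))"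
      by (rule PL) (auto simp: X_def Y_def Z_def J_def wp_def)
    have 8: "eval A \<sigma> (Mt X (Cp X)) = eval A \<sigma> (Mt Y (Cp Y))"
      by (rule PL) (auto simp: X_def Y_def Z_def J_def wp_def)
    have 9: "eval A \<sigma> (J X (Cp X)) = eval A \<sigma> (J Y (Cp Y))"
      by (rule PL) (auto simp: X_def Y_def Z_def J_def wp_def)
    have 10: "eval A \<sigma> (Mt (Mt X (Cp X)) Y) = eval A \<sigma> (Mt X (Cp X))"
      by (rule PL) (auto simp: X_def Y_def Z_def J_def wp_def)
    have 11: "eval A \<sigma> (Mt (J X (Cp X)) Y) = eval A \<sigma> Y"
      by (rule PL) (auto simp: X_def Y_def Z_def J_def wp_def)
    show "mt A x y = mt A y x \<and> jn A x y = jn A y x \<and>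
      mt A (mt A x y) z = mt A x (mt A y z) \<and> jn A (jn A x y) z = jn A x (jn A y z) \<and>
      mt A x (jn A x y) = x \<and> jn A x (mt A x y) = x \<and>
      mt A x (jn A y z) = jn A (mt A x y) (mt A x z) \<and>
      mt A x (cp A x) = mt A y (cp A y) \<and> jn A x (cp A x) = jn A y (cp A y) \<and>
      mt A (mt A x (cp A x)) y = mt A x (cp A x) \<and>
      mt A (jn A x (cp A x)) y = y"
      using 1 2 3 4 5 6 7 8 9 10 11 by (simp only: e eval.simps)
  qed
  have en: "endo_ax A" unfolding endo_ax_def
  proof (intro allI impI ballI)
    fix i j :: 'i and x y assume ij: "i \<noteq> j" and xy: "x \<in> carrier A" "y \<in> carrier A"
    define \<sigma> where "\<sigma> n = (if n = 0 then x else y)" for n :: nat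
    have s: "\<forall>n. \<sigma> n \<in> carrier A" using xy by (simp add: \<sigma>_def)
    note PL = pta_law[OF A _ _ _ s]
    have 1: "eval A \<sigma> (Sb i j (Mt X Y)) = eval A \<sigma> (Mt (Sb i j X) (Sb i j Y))"
      by (rule PL) (auto simp: X_def Y_def ij wp_def)
    have 2: "eval A \<sigma> (Sb i j (Cp X)) = eval A \<sigma> (Cp (Sb i j X))"
      by (rule PL) (auto simp: X_def ij wp_def permutable_def)
    show "sb A i j (mt A x y) = mt A (sb A i j x) (sb A i j y) \<and> sb A i j (cp A x) = cp A (sb A i j x)"
      using 1 2 by (simp add: X_def Y_def \<sigma>_def)
  qed
  have wx: "word_ax A" unfolding word_ax_def
  proof (intro allI impI ballI)
    fix w1 w2 :: "('i \<times> 'i) list" and x assume w: "word_ok w1 \<and> word_ok w2 \<and> word_perm w1 = word_perm w2"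
      and x: "x \<in> carrier A"
    have s: "\<forall>n. (\<lambda>n. x) n \<in> carrier A" using x by simp
    have "eval A (\<lambda>n. x) (wtrm w1) = eval A (\<lambda>n. x) (wtrm w2)"
    proof (rule pta_law[OF A _ _ _ s])
      show "wf_trm (wtrm w1)" "wf_trm (wtrm w2)" using w wtrm_wf by auto
      fix V :: "('i \<Rightarrow> 'i) set" and \<sigma> :: "nat \<Rightarrow> ('i \<Rightarrow> 'i) set" assume "\<forall>n. \<sigma> n \<subseteq> V" "permutable V"
      then show "eval (wp V) \<sigma> (wtrm w1) = eval (wp V) \<sigma> (wtrm w2)"
        using w by (simp add: wtrm_eval wtrm_wp)
    qed
    then show "word_app A w1 x = word_app A w2 x" by (simp add: wtrm_eval)
  qed
  show ?thesis using wf ba en wx unfolding TA_def by blast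
qed

theorem theorem3p26:
  assumes "infinite (UNIV :: 'i set)"
  shows "(TA :: ('i, 'b) talg set) = PTA"
  using TA_sub_PTA PTA_sub_TA by blast

end
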